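(* Let $G^\sigma$ be a connected oriented graph of order $n\in\{2,3,4\}$ with $sr(G^\sigma)=2$. Then: (1) if $n=2$, $G^\sigma$ is the path $P_2^\sigma$ with arbitrary orientation; (2) if $n=3$, the underlying graph is $K_3$ or $P_3$ (with any orientation of the edges); (3) if $n=4$, $G^\sigma$ is one of: (a) an evenly-oriented cycle $C_4^\sigma$; (b) an orientation (arbitrary) of the star $K_{1,3}$; (c) an evenly-oriented orientation of $K_{1,1,2}$ (i.e. an orientation of $K_4$ minus an edge in which every cycle of length $4$ is evenly-oriented).
   Context: An oriented graph $G^\sigma$ is a simple graph $G$ (underlying graph) together with an orientation of each edge. Its skew-adjacency matrix $S(G^\sigma)=(s_{ij})$ has $s_{ij}=1$ if there is an arc from $v_i$ to $v_j$, $s_{ij}=-1$ if there is an arc from $v_j$ to $v_i$, and $0$ otherwise; the skew-rank $sr(G^\sigma)$ is the rank of $S(G^\sigma)$. For an even cycle $u_1\cdots u_ku_1$, its sign is the sign of $\prod_{i=1}^k s_{u_iu_{i+1}}$ ($u_{k+1}=u_1$); the cycle is evenly-oriented if this sign is positive. An oriented graph is evenly-oriented if every even cycle in it is evenly-oriented. $P_n$, $C_n$, $K_n$ denote path, cycle, complete graph on $n$ vertices; $K_{1,1,2}$ is the complete tripartite graph with parts of sizes $1,1,2$. *)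

theory Defs
  imports "HOL-Analysis.Analysis"
begin

text \<open>An oriented graph on the finite vertex type 'n (vertex set = UNIV) is given by an
arc relation A: A x y means there is an arc from x to y.\<close>

definition oriented_graph :: "('n \<Rightarrow> 'n \<Rightarrow> bool) \<Rightarrow> bool" where
  "oriented_graph A \<longleftrightarrow> (\<forall>x. \<not> A x x) \<and> (\<forall>x y. A x y \<longrightarrow> \<not> A y x)"

definition underlying :: "('n \<Rightarrow> 'n \<Rightarrow> bool) \<Rightarrow> 'n \<Rightarrow> 'n \<Rightarrow> bool" where
  "underlying A x y \<longleftrightarrow> A x y \<or> A y x"

definition connected_graph :: "('n \<Rightarrow> 'n \<Rightarrow> bool) \<Rightarrow> bool" where
  "connected_graph E \<longleftrightarrow> (\<forall>x y. E\<^sup>*\<^sup>* x y)"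

definition skew_entry :: "('n \<Rightarrow> 'n \<Rightarrow> bool) \<Rightarrow> 'n \<Rightarrow> 'n \<Rightarrow> real" where
  "skew_entry A x y = (if A x y then 1 else if A y x then -1 else 0)"

definition skew_adj :: "('n::finite \<Rightarrow> 'n \<Rightarrow> bool) \<Rightarrow> real^'n^'n" where
  "skew_adj A = (\<chi> i j. skew_entry A i j)"

definition skew_rank :: "('n::finite \<Rightarrow> 'n \<Rightarrow> bool) \<Rightarrow> nat" where
  "skew_rank A = rank (skew_adj A)"

definition is_cycle :: "('n \<Rightarrow> 'n \<Rightarrow> bool) \<Rightarrow> 'n list \<Rightarrow> bool" where
  "is_cycle E us \<longleftrightarrow> length us \<ge> 3 \<and> distinct us \<and>
     (\<forall>i < length us. E (us ! i) (us ! ((i + 1) mod length us)))"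

definition cycle_sign :: "('n \<Rightarrow> 'n \<Rightarrow> bool) \<Rightarrow> 'n list \<Rightarrow> real" where
  "cycle_sign A us = (\<Prod>i < length us. skew_entry A (us ! i) (us ! ((i + 1) mod length us)))"

definition evenly_oriented :: "('n \<Rightarrow> 'n \<Rightarrow> bool) \<Rightarrow> bool" where
  "evenly_oriented A \<longleftrightarrow>
     (\<forall>us. is_cycle (underlying A) us \<and> even (length us) \<longrightarrow> cycle_sign A us > 0)"

definition path_graph :: "nat \<Rightarrow> nat \<Rightarrow> nat \<Rightarrow> bool" where
  "path_graph k i j \<longleftrightarrow> i < k \<and> j < k \<and> (j = i + 1 \<or> i = j + 1)"

definition cycle_graph :: "nat \<Rightarrow> nat \<Rightarrow> nat \<Rightarrow> bool" where
  "cycle_graph k i j \<longleftrightarrow> path_graph k i j \<or>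
     (i \<noteq> j \<and> {i, j} = {0, k - 1})"

definition complete_graph :: "nat \<Rightarrow> nat \<Rightarrow> nat \<Rightarrow> bool" where
  "complete_graph k i j \<longleftrightarrow> i < k \<and> j < k \<and> i \<noteq> j"

definition star_K13 :: "nat \<Rightarrow> nat \<Rightarrow> bool" where
  "star_K13 i j \<longleftrightarrow> i < 4 \<and> j < 4 \<and> i \<noteq> j \<and> (i = 0 \<or> j = 0)"

text \<open>K_{1,1,2}: parts {0}, {1}, {2,3}; i.e. K_4 minus the edge 23.\<close>
definition K112 :: "nat \<Rightarrow> nat \<Rightarrow> bool" where
  "K112 i j \<longleftrightarrow> complete_graph 4 i j \<and> {i, j} \<noteq> {2, 3}"

definition iso_to :: "('n \<Rightarrow> 'n \<Rightarrow> bool) \<Rightarrow> nat \<Rightarrow> (nat \<Rightarrow> nat \<Rightarrow> bool) \<Rightarrow> bool" where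
  "iso_to E k H \<longleftrightarrow> (\<exists>f. bij_betw f (UNIV :: 'n set) {0..<k} \<and>
      (\<forall>x y. E x y \<longleftrightarrow> H (f x) (f y)))"

end

theory Submission
  imports Defs
begin


lemma card4_enum: "card S = 4 \<Longrightarrow> \<exists>a b c d. S = {a,b,c,d} \<and> distinct [a,b,c,d]"
  by (auto simp: card_Suc_eq numeral_eq_Suc)

lemma iso_by_list:
  assumes "distinct xs" "set xs = UNIV" "length xs = k"
    "\<forall>i<k. \<forall>j<k. E (xs!i) (xs!j) = H i j"
  shows "iso_to E k H"
proof -
  have b: "bij_betw ((!) xs) {0..<k} UNIV"
    using bij_betw_nth[OF assms(1)] assms(2,3) by (simp add: atLeast0LessThan)
  let ?f = "inv_into {0..<k} ((!) xs)"
  have bf: "bij_betw ?f UNIV {0..<k}" using bij_betw_inv_into[OF b] .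
  have e: "xs ! (?f x) = x" for x using b by (meson UNIV_I bij_betw_inv_into_right)
  have r: "?f x < k" for x using bf by (auto simp: bij_betw_def)
  show ?thesis unfolding iso_to_def
  proof (intro exI conjI allI)
    show "bij_betw ?f UNIV {0..<k}" by fact
    fix x y show "E x y = H (?f x) (?f y)"
      using assms(4) r[of x] r[of y] e[of x] e[of y] by metis
  qed
qed

lemma conn_cross:
  assumes "connected_graph E" "x \<in> S" "y \<notin> S"
  shows "\<exists>u\<in>S. \<exists>v. v \<notin> S \<and> E u v"
proof -
  have "E\<^sup>*\<^sup>* x y" using assms(1) by (simp add: connected_graph_def)
  then have "y \<in> S \<or> (\<exists>u\<in>S. \<exists>v. v \<notin> S \<and> E u v)"
    by (induction rule: rtranclp_induct) (use assms(2) in auto)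
  then show ?thesis using assms(3) by auto
qed

lemma kernel_exists:
  fixes M :: "real^'n^'n"
  assumes "rank M < CARD('n)"
  shows "\<exists>v. v \<noteq> 0 \<and> M *v v = 0"
  using matrix_nonfull_linear_equations_eq[of M] assms by auto



lemma skew_anti: "oriented_graph A \<Longrightarrow> skew_entry A y x = - skew_entry A x y"
  by (auto simp: skew_entry_def oriented_graph_def)

lemma skew_self: "oriented_graph A \<Longrightarrow> skew_entry A x x = 0"
  by (auto simp: skew_entry_def oriented_graph_def)

lemma und_iff: "underlying A x y \<longleftrightarrow> skew_entry A x y \<noteq> 0"
  by (auto simp: skew_entry_def underlying_def)

lemma skew_vals: "skew_entry A x y \<in> {-1,0,1}"
  by (auto simp: skew_entry_def)

lemma evenly4:
  fixes A :: "'n \<Rightarrow> 'n \<Rightarrow> bool"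
  assumes og: "oriented_graph A" and U: "UNIV = {a,b,c,d::'n}"
    and H: "\<And>p q r t. distinct [p,q,r,t] \<Longrightarrow> skew_entry A p q \<noteq> 0 \<Longrightarrow> skew_entry A q r \<noteq> 0
       \<Longrightarrow> skew_entry A r t \<noteq> 0 \<Longrightarrow> skew_entry A t p \<noteq> 0
       \<Longrightarrow> skew_entry A p q * skew_entry A q r * skew_entry A r t * skew_entry A t p > 0"
  shows "evenly_oriented A"
  unfolding evenly_oriented_def
proof (intro allI impI)
  fix us :: "'n list"
  assume a: "is_cycle (underlying A) us \<and> even (length us)"
  have dist: "distinct us" and l3: "length us \<ge> 3" using a by (auto simp: is_cycle_def)
  have "length us = card (set us)" using dist by (simp add: distinct_card)
  also have "\<dots> \<le> card (UNIV::'n set)" by (rule card_mono) (simp add: U, rule subset_UNIV)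
  also have "\<dots> \<le> 4" unfolding U using card_length[of "[a,b,c,d]"] by simp
  finally have "length us \<le> 4" .
  moreover have "even (length us)" using a by simp
  ultimately have l4: "length us = 4"
  proof -
    assume "length us \<le> 4" "even (length us)"
    then have "length us = 3 \<or> length us = 4" using l3 by linarith
    then show ?thesis using \<open>even (length us)\<close> by auto
  qed
  have us0: "us = [us!0, us!1, us!2, us!3]"
    by (rule nth_equalityI) (auto simp: l4 less_Suc_eq numeral_eq_Suc)
  then obtain p q r t where us: "us = [p,q,r,t]" by blast
  have ed: "\<forall>i<4. underlying A (us ! i) (us ! ((i + 1) mod 4))" using a l4 by (simp add: is_cycle_def)
  then have "underlying A p q" "underlying A q r" "underlying A r t" "underlying A t p"
    using spec[OF ed, of 0] spec[OF ed, of 1] spec[OF ed, of 2] spec[OF ed, of 3] by (auto simp: us)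
  moreover have "cycle_sign A us = skew_entry A p q * skew_entry A q r * skew_entry A r t * skew_entry A t p"
    by (simp add: cycle_sign_def us lessThan_nat_numeral)
  ultimately show "cycle_sign A us > 0" using H[of p q r t] dist by (auto simp: us und_iff)
qed



lemma pf_zero:
  fixes A :: "'n::finite \<Rightarrow> 'n \<Rightarrow> bool"
  assumes og: "oriented_graph A" and U: "UNIV = {a,b,c,d}" and dist: "distinct [a,b,c,d]"
    and rk: "skew_rank A < CARD('n)"
  shows "skew_entry A a b * skew_entry A c d - skew_entry A a c * skew_entry A b d
         + skew_entry A a d * skew_entry A b c = 0"
proof -
  let ?s = "skew_entry A"
  obtain v where v0: "v \<noteq> 0" and mv: "skew_adj A *v v = 0"
    using kernel_exists[of "skew_adj A"] rk by (auto simp: skew_rank_def)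
  have eq: "(\<Sum>j\<in>{a,b,c,d}. ?s x j * v$j) = 0" for x
  proof -
    have "(skew_adj A *v v) $ x = 0" using mv by simp
    then show ?thesis by (simp add: matrix_vector_mult_def skew_adj_def U)
  qed
  have e: "?s x a * v$a + ?s x b * v$b + ?s x c * v$c + ?s x d * v$d = 0" for x
    using eq[of x] dist by (simp add: add.assoc)
  have an: "?s y x = - ?s x y" for x y using skew_anti[OF og] .
  have sl: "?s x x = 0" for x using skew_self[OF og] .
  define x1 where "x1 = ?s a b"
  define x2 where "x2 = ?s a c"
  define x3 where "x3 = ?s a d"
  define x4 where "x4 = ?s b c"
  define x5 where "x5 = ?s b d"
  define x6 where "x6 = ?s c d"
  have E0: "x1 * v$b + x2 * v$c + x3 * v$d = 0" using e[of a] sl[of a] by (simp add: x1_def x2_def x3_def)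
  have E1: "- x1 * v$a + x4 * v$c + x5 * v$d = 0" using e[of b] sl[of b] an[of b a] by (simp add: x1_def x4_def x5_def)
  have E2: "- x2 * v$a - x4 * v$b + x6 * v$d = 0" using e[of c] sl[of c] an[of c a] an[of c b] by (simp add: x2_def x4_def x6_def)
  have E3: "- x3 * v$a - x5 * v$b - x6 * v$c = 0" using e[of d] sl[of d] an[of d a] an[of d b] an[of d c] by (simp add: x3_def x5_def x6_def)
  define P where "P = x1 * x6 - x2 * x5 + x3 * x4"
  have "P * v$a = 0" "P * v$b = 0" "P * v$c = 0" "P * v$d = 0"
    unfolding P_def using E0 E1 E2 E3 by algebra+
  moreover obtain i where "v$i \<noteq> 0" using v0 by (metis vec_eq_iff zero_index)
  moreover have "i \<in> {a,b,c,d}" using U by blast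
  ultimately have "P = 0" by auto
  then show ?thesis by (simp add: P_def x1_def x2_def x3_def x4_def x5_def x6_def)
qed



lemma all4: "(\<forall>i<4::nat. P i) \<longleftrightarrow> P 0 \<and> P 1 \<and> P 2 \<and> P 3"
  by (auto simp: less_Suc_eq numeral_eq_Suc)

lemma cyc4: "cycle_graph 4 i j \<longleftrightarrow> i<4 \<and> j<4 \<and> (j = i+1 \<or> i = j+1 \<or> (i=0\<and>j=3) \<or> (i=3\<and>j=0))"
  unfolding cycle_graph_def path_graph_def doubleton_eq_iff by force

lemma star_shape:
  fixes A :: "'n \<Rightarrow> 'n \<Rightarrow> bool"
  assumes og: "oriented_graph A" and U: "UNIV = {c,x,y,z}" and dist: "distinct [c,x,y,z]"
    and "skew_entry A c x \<noteq> 0" "skew_entry A c y \<noteq> 0" "skew_entry A c z \<noteq> 0"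
    "skew_entry A x y = 0" "skew_entry A x z = 0" "skew_entry A y z = 0"
  shows "iso_to (underlying A) 4 star_K13"
proof (rule iso_by_list[of "[c,x,y,z]"])
  have an: "skew_entry A v u = - skew_entry A u v" for u v using skew_anti[OF og] .
  have sl: "skew_entry A u u = 0" for u using skew_self[OF og] .
  show "distinct [c,x,y,z]" by fact
  show "set [c,x,y,z] = UNIV" using U by simp
  show "length [c,x,y,z] = 4" by simp
  show "\<forall>i<4. \<forall>j<4. underlying A ([c,x,y,z] ! i) ([c,x,y,z] ! j) = star_K13 i j"
    unfolding all4 using assms an[of c x] an[of c y] an[of c z] an[of x y] an[of x z] an[of y z]
    by (simp add: und_iff star_K13_def sl)
qed

lemma c4_shape:
  fixes A :: "'n \<Rightarrow> 'n \<Rightarrow> bool"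
  assumes og: "oriented_graph A" and U: "UNIV = {p,q,r,t}" and dist: "distinct [p,q,r,t]"
    and h: "skew_entry A p q \<noteq> 0" "skew_entry A q r \<noteq> 0" "skew_entry A r t \<noteq> 0" "skew_entry A t p \<noteq> 0"
    "skew_entry A p r = 0" "skew_entry A q t = 0"
    and sg: "skew_entry A p q * skew_entry A q r * skew_entry A r t * skew_entry A t p = 1"
  shows "iso_to (underlying A) 4 (cycle_graph 4) \<and> evenly_oriented A"
proof
  have an: "skew_entry A v u = - skew_entry A u v" for u v using skew_anti[OF og] .
  have sl: "skew_entry A u u = 0" for u using skew_self[OF og] .
  show "iso_to (underlying A) 4 (cycle_graph 4)"
  proof (rule iso_by_list[of "[p,q,r,t]"])
    show "distinct [p,q,r,t]" by fact
    show "set [p,q,r,t] = UNIV" using U by simp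
    show "length [p,q,r,t] = 4" by simp
    show "\<forall>i<4. \<forall>j<4. underlying A ([p,q,r,t] ! i) ([p,q,r,t] ! j) = cycle_graph 4 i j"
      unfolding all4 using h an[of p q] an[of q r] an[of r t] an[of t p] an[of p r] an[of q t]
      by (simp add: und_iff cyc4 sl)
  qed
  show "evenly_oriented A"
  proof (rule evenly4[OF og U])
    fix a b c d assume d: "distinct [a,b,c,d]" and nz: "skew_entry A a b \<noteq> 0" "skew_entry A b c \<noteq> 0"
       "skew_entry A c d \<noteq> 0" "skew_entry A d a \<noteq> 0"
    have m: "a \<in> {p,q,r,t}" "b \<in> {p,q,r,t}" "c \<in> {p,q,r,t}" "d \<in> {p,q,r,t}" using U by blast+
    have r: "skew_entry A q p = - skew_entry A p q" "skew_entry A r q = - skew_entry A q r"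
       "skew_entry A t r = - skew_entry A r t" "skew_entry A p t = - skew_entry A t p"
       "skew_entry A r p = 0" "skew_entry A t q = 0"
      using an[of p q] an[of q r] an[of r t] an[of t p] an[of p r] an[of q t] h by auto
    show "skew_entry A a b * skew_entry A b c * skew_entry A c d * skew_entry A d a > 0"
      using m apply (elim insertE emptyE)
      using d nz h r sg[simplified mult.assoc mult.commute mult.left_commute]
      by (simp_all add: sl mult_ac)
  qed
qed



lemma k112: "K112 i j \<longleftrightarrow> i<4 \<and> j<4 \<and> i \<noteq> j \<and> \<not>(i=2\<and>j=3) \<and> \<not>(i=3\<and>j=2)"
  unfolding K112_def complete_graph_def doubleton_eq_iff by force

lemma k112_shape:
  fixes A :: "'n \<Rightarrow> 'n \<Rightarrow> bool"
  assumes og: "oriented_graph A" and U: "UNIV = {w,z,u,v}" and dist: "distinct [w,z,u,v]"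
    and h: "skew_entry A w z \<noteq> 0" "skew_entry A u w \<noteq> 0" "skew_entry A w v \<noteq> 0" "skew_entry A v z \<noteq> 0"
    "skew_entry A z u \<noteq> 0" "skew_entry A u v = 0"
    and sg: "skew_entry A u w * skew_entry A w v * skew_entry A v z * skew_entry A z u = 1"
  shows "iso_to (underlying A) 4 K112 \<and> evenly_oriented A"
proof
  have an: "skew_entry A y x = - skew_entry A x y" for x y using skew_anti[OF og] .
  have sl: "skew_entry A x x = 0" for x using skew_self[OF og] .
  show "iso_to (underlying A) 4 K112"
  proof (rule iso_by_list[of "[w,z,u,v]"])
    show "distinct [w,z,u,v]" by fact
    show "set [w,z,u,v] = UNIV" using U by simp
    show "length [w,z,u,v] = 4" by simp
    show "\<forall>i<4. \<forall>j<4. underlying A ([w,z,u,v] ! i) ([w,z,u,v] ! j) = K112 i j"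
      unfolding all4 using h an[of u w] an[of w v] an[of v z] an[of z u] an[of w z] an[of u v]
      by (simp add: und_iff k112 sl)
  qed
  show "evenly_oriented A"
  proof (rule evenly4[OF og U])
    fix a b c d assume d: "distinct [a,b,c,d]" and nz: "skew_entry A a b \<noteq> 0" "skew_entry A b c \<noteq> 0"
       "skew_entry A c d \<noteq> 0" "skew_entry A d a \<noteq> 0"
    have m: "a \<in> {w,z,u,v}" "b \<in> {w,z,u,v}" "c \<in> {w,z,u,v}" "d \<in> {w,z,u,v}" using U by blast+
    have r: "skew_entry A w u = - skew_entry A u w" "skew_entry A v w = - skew_entry A w v"
       "skew_entry A z v = - skew_entry A v z" "skew_entry A u z = - skew_entry A z u"
       "skew_entry A z w = - skew_entry A w z" "skew_entry A v u = 0"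
      using an[of u w] an[of w v] an[of v z] an[of z u] an[of w z] an[of u v] h by auto
    show "skew_entry A a b * skew_entry A b c * skew_entry A c d * skew_entry A d a > 0"
      using m apply (elim insertE emptyE)
      using d nz h r sg[simplified mult.assoc mult.commute mult.left_commute]
      by (simp_all add: sl mult_ac)
  qed
qed


lemma cases4:
  fixes x1 x2 x3 x4 x5 x6 :: real
  assumes v: "x1 \<in> {-1,0,1}" "x2 \<in> {-1,0,1}" "x3 \<in> {-1,0,1}" "x4 \<in> {-1,0,1}" "x5 \<in> {-1,0,1}" "x6 \<in> {-1,0,1}"
    and c: "x1 \<noteq> 0 \<or> x2 \<noteq> 0 \<or> x3 \<noteq> 0" "x1 \<noteq> 0 \<or> x4 \<noteq> 0 \<or> x5 \<noteq> 0"
    "x2 \<noteq> 0 \<or> x4 \<noteq> 0 \<or> x6 \<noteq> 0" "x3 \<noteq> 0 \<or> x5 \<noteq> 0 \<or> x6 \<noteq> 0"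
    "x2 \<noteq> 0 \<or> x3 \<noteq> 0 \<or> x4 \<noteq> 0 \<or> x5 \<noteq> 0" "x1 \<noteq> 0 \<or> x3 \<noteq> 0 \<or> x4 \<noteq> 0 \<or> x6 \<noteq> 0"
    "x1 \<noteq> 0 \<or> x2 \<noteq> 0 \<or> x5 \<noteq> 0 \<or> x6 \<noteq> 0"
    and pf: "x1 * x6 - x2 * x5 + x3 * x4 = 0"
  shows "(x1 \<noteq> 0 \<and> x2 \<noteq> 0 \<and> x3 \<noteq> 0 \<and> x4 = 0 \<and> x5 = 0 \<and> x6 = 0)
       \<or> (x1 \<noteq> 0 \<and> x4 \<noteq> 0 \<and> x5 \<noteq> 0 \<and> x2 = 0 \<and> x3 = 0 \<and> x6 = 0)
       \<or> (x2 \<noteq> 0 \<and> x4 \<noteq> 0 \<and> x6 \<noteq> 0 \<and> x1 = 0 \<and> x3 = 0 \<and> x5 = 0)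
       \<or> (x3 \<noteq> 0 \<and> x5 \<noteq> 0 \<and> x6 \<noteq> 0 \<and> x1 = 0 \<and> x2 = 0 \<and> x4 = 0)
       \<or> (x2 \<noteq> 0 \<and> x3 \<noteq> 0 \<and> x4 \<noteq> 0 \<and> x5 \<noteq> 0 \<and> x1 = 0 \<and> x6 = 0 \<and> x2*(-x4)*x5*(-x3) = 1)
       \<or> (x2 \<noteq> 0 \<and> x3 \<noteq> 0 \<and> x4 \<noteq> 0 \<and> x5 \<noteq> 0 \<and> x1 \<noteq> 0 \<and> x6 = 0 \<and> (-x2)*x3*(-x5)*x4 = 1)
       \<or> (x2 \<noteq> 0 \<and> x3 \<noteq> 0 \<and> x4 \<noteq> 0 \<and> x5 \<noteq> 0 \<and> x6 \<noteq> 0 \<and> x1 = 0 \<and> x2*(-x4)*x5*(-x3) = 1)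
       \<or> (x1 \<noteq> 0 \<and> x3 \<noteq> 0 \<and> x4 \<noteq> 0 \<and> x6 \<noteq> 0 \<and> x2 = 0 \<and> x5 = 0 \<and> x1*x4*x6*(-x3) = 1)
       \<or> (x1 \<noteq> 0 \<and> x3 \<noteq> 0 \<and> x4 \<noteq> 0 \<and> x6 \<noteq> 0 \<and> x2 \<noteq> 0 \<and> x5 = 0 \<and> (-x1)*x3*(-x6)*(-x4) = 1)
       \<or> (x1 \<noteq> 0 \<and> x3 \<noteq> 0 \<and> x4 \<noteq> 0 \<and> x6 \<noteq> 0 \<and> x5 \<noteq> 0 \<and> x2 = 0 \<and> x1*x4*x6*(-x3) = 1)
       \<or> (x1 \<noteq> 0 \<and> x2 \<noteq> 0 \<and> x5 \<noteq> 0 \<and> x6 \<noteq> 0 \<and> x3 = 0 \<and> x4 = 0 \<and> x1*x5*(-x6)*(-x2) = 1)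
       \<or> (x1 \<noteq> 0 \<and> x2 \<noteq> 0 \<and> x5 \<noteq> 0 \<and> x6 \<noteq> 0 \<and> x3 \<noteq> 0 \<and> x4 = 0 \<and> (-x1)*x2*x6*(-x5) = 1)
       \<or> (x1 \<noteq> 0 \<and> x2 \<noteq> 0 \<and> x5 \<noteq> 0 \<and> x6 \<noteq> 0 \<and> x4 \<noteq> 0 \<and> x3 = 0 \<and> x1*x5*(-x6)*(-x2) = 1)"
  using v apply (elim insertE emptyE)
  using c pf by simp_all


lemma und_sym: "underlying A x y = underlying A y x" by (auto simp: underlying_def)
lemma und_irr: "oriented_graph A \<Longrightarrow> \<not> underlying A x x" by (auto simp: underlying_def oriented_graph_def)

lemma conn_single:
  assumes "connected_graph E" "y \<noteq> x"
  shows "\<exists>v. v \<noteq> x \<and> E x v"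
  using conn_cross[OF assms(1), of x "{x}" y] assms(2) by auto

lemma conn_pair:
  assumes "connected_graph E" "y \<noteq> x" "y \<noteq> x'"
  shows "\<exists>v. v \<noteq> x \<and> v \<noteq> x' \<and> (E x v \<or> E x' v)"
  using conn_cross[OF assms(1), of x "{x,x'}" y] assms(2,3) by auto

lemma main4:
  fixes A :: "'n::finite \<Rightarrow> 'n \<Rightarrow> bool" and a b c d :: 'n
  assumes og: "oriented_graph A" and cn: "connected_graph (underlying A)"
    and U: "UNIV = {a,b,c,d}" and dist: "distinct [a,b,c,d]" and rk: "skew_rank A < CARD('n)"
  shows "(iso_to (underlying A) 4 (cycle_graph 4) \<and> evenly_oriented A)
          \<or> iso_to (underlying A) 4 star_K13
          \<or> (iso_to (underlying A) 4 K112 \<and> evenly_oriented A)"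
proof -
  let ?s = "skew_entry A"
  have an: "?s y x = - ?s x y" for x y using skew_anti[OF og] .
  have all: "v = a \<or> v = b \<or> v = c \<or> v = d" for v using U by blast
  define x1 where "x1 = ?s a b"
  define x2 where "x2 = ?s a c"
  define x3 where "x3 = ?s a d"
  define x4 where "x4 = ?s b c"
  define x5 where "x5 = ?s b d"
  define x6 where "x6 = ?s c d"
  note xd = x1_def x2_def x3_def x4_def x5_def x6_def
  have R: "?s b a = - x1" "?s c a = - x2" "?s d a = - x3" "?s c b = - x4" "?s d b = - x5" "?s d c = - x6"
    using an[of a b] an[of a c] an[of a d] an[of b c] an[of b d] an[of c d] by (simp_all add: xd)
  have v: "x1 \<in> {-1,0,1}" "x2 \<in> {-1,0,1}" "x3 \<in> {-1,0,1}" "x4 \<in> {-1,0,1}" "x5 \<in> {-1,0,1}" "x6 \<in> {-1,0,1}"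
    unfolding xd by (rule skew_vals)+
  have pf: "x1 * x6 - x2 * x5 + x3 * x4 = 0" unfolding xd by (rule pf_zero[OF og U dist rk])
  have ui: "underlying A x y \<longleftrightarrow> ?s x y \<noteq> 0" for x y by (rule und_iff)
  have sl: "?s x x = 0" for x using skew_self[OF og] .
  have c1: "x1 \<noteq> 0 \<or> x2 \<noteq> 0 \<or> x3 \<noteq> 0"
  proof -
    obtain v where "v \<noteq> a \<and> underlying A a v" using conn_single[OF cn, of b a] dist by auto
    then show ?thesis using all[of v] by (auto simp: ui xd R sl)
  qed
  have c2: "x1 \<noteq> 0 \<or> x4 \<noteq> 0 \<or> x5 \<noteq> 0"
  proof -
    obtain v where "v \<noteq> b \<and> underlying A b v" using conn_single[OF cn, of a b] dist by auto
    then show ?thesis using all[of v] by (auto simp: ui xd R sl)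
  qed
  have c3: "x2 \<noteq> 0 \<or> x4 \<noteq> 0 \<or> x6 \<noteq> 0"
  proof -
    obtain v where "v \<noteq> c \<and> underlying A c v" using conn_single[OF cn, of a c] dist by auto
    then show ?thesis using all[of v] by (auto simp: ui xd R sl)
  qed
  have c4: "x3 \<noteq> 0 \<or> x5 \<noteq> 0 \<or> x6 \<noteq> 0"
  proof -
    obtain v where "v \<noteq> d \<and> underlying A d v" using conn_single[OF cn, of a d] dist by auto
    then show ?thesis using all[of v] by (auto simp: ui xd R sl)
  qed
  have c5: "x2 \<noteq> 0 \<or> x3 \<noteq> 0 \<or> x4 \<noteq> 0 \<or> x5 \<noteq> 0"
  proof -
    obtain v where "v \<noteq> a \<and> v \<noteq> b \<and> (underlying A a v \<or> underlying A b v)" using conn_pair[OF cn, of c a b] dist by auto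
    then show ?thesis using all[of v] by (auto simp: ui xd R sl)
  qed
  have c6: "x1 \<noteq> 0 \<or> x3 \<noteq> 0 \<or> x4 \<noteq> 0 \<or> x6 \<noteq> 0"
  proof -
    obtain v where "v \<noteq> a \<and> v \<noteq> c \<and> (underlying A a v \<or> underlying A c v)" using conn_pair[OF cn, of b a c] dist by auto
    then show ?thesis using all[of v] by (auto simp: ui xd R sl)
  qed
  have c7: "x1 \<noteq> 0 \<or> x2 \<noteq> 0 \<or> x5 \<noteq> 0 \<or> x6 \<noteq> 0"
  proof -
    obtain v where "v \<noteq> a \<and> v \<noteq> d \<and> (underlying A a v \<or> underlying A d v)" using conn_pair[OF cn, of b a d] dist by auto
    then show ?thesis using all[of v] by (auto simp: ui xd R sl)
  qed
  show ?thesis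
    using cases4[OF v c1 c2 c3 c4 c5 c6 c7 pf]
  proof (elim disjE)
    assume h: "x1 \<noteq> 0 \<and> x2 \<noteq> 0 \<and> x3 \<noteq> 0 \<and> x4 = 0 \<and> x5 = 0 \<and> x6 = 0"
    have u': "UNIV = {a,b,c,d}" using U by (simp add: insert_commute)
    have d': "distinct [a,b,c,d]" using dist by auto
    have "iso_to (underlying A) 4 star_K13"
      by (rule star_shape[OF og u' d']) (use h in \<open>simp_all add: xd[symmetric] R\<close>)
    then show ?thesis by blast
  next
    assume h: "x1 \<noteq> 0 \<and> x4 \<noteq> 0 \<and> x5 \<noteq> 0 \<and> x2 = 0 \<and> x3 = 0 \<and> x6 = 0"
    have u': "UNIV = {b,a,c,d}" using U by (simp add: insert_commute)
    have d': "distinct [b,a,c,d]" using dist by auto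
    have "iso_to (underlying A) 4 star_K13"
      by (rule star_shape[OF og u' d']) (use h in \<open>simp_all add: xd[symmetric] R\<close>)
    then show ?thesis by blast
  next
    assume h: "x2 \<noteq> 0 \<and> x4 \<noteq> 0 \<and> x6 \<noteq> 0 \<and> x1 = 0 \<and> x3 = 0 \<and> x5 = 0"
    have u': "UNIV = {c,a,b,d}" using U by (simp add: insert_commute)
    have d': "distinct [c,a,b,d]" using dist by auto
    have "iso_to (underlying A) 4 star_K13"
      by (rule star_shape[OF og u' d']) (use h in \<open>simp_all add: xd[symmetric] R\<close>)
    then show ?thesis by blast
  next
    assume h: "x3 \<noteq> 0 \<and> x5 \<noteq> 0 \<and> x6 \<noteq> 0 \<and> x1 = 0 \<and> x2 = 0 \<and> x4 = 0"
    have u': "UNIV = {d,a,b,c}" using U by (simp add: insert_commute)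
    have d': "distinct [d,a,b,c]" using dist by auto
    have "iso_to (underlying A) 4 star_K13"
      by (rule star_shape[OF og u' d']) (use h in \<open>simp_all add: xd[symmetric] R\<close>)
    then show ?thesis by blast
  next
    assume h: "x2 \<noteq> 0 \<and> x3 \<noteq> 0 \<and> x4 \<noteq> 0 \<and> x5 \<noteq> 0 \<and> x1 = 0 \<and> x6 = 0 \<and> x2*(-x4)*x5*(-x3) = 1"
    have u': "UNIV = {a,c,b,d}" using U by (simp add: insert_commute)
    have d': "distinct [a,c,b,d]" using dist by auto
    have "iso_to (underlying A) 4 (cycle_graph 4) \<and> evenly_oriented A"
      by (rule c4_shape[OF og u' d']) (use h in \<open>simp_all add: xd[symmetric] R\<close>)
    then show ?thesis by blast
  next
    assume h: "x2 \<noteq> 0 \<and> x3 \<noteq> 0 \<and> x4 \<noteq> 0 \<and> x5 \<noteq> 0 \<and> x1 \<noteq> 0 \<and> x6 = 0 \<and> (-x2)*x3*(-x5)*x4 = 1"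
    have u': "UNIV = {a,b,c,d}" using U by (simp add: insert_commute)
    have d': "distinct [a,b,c,d]" using dist by auto
    have "iso_to (underlying A) 4 K112 \<and> evenly_oriented A"
      by (rule k112_shape[OF og u' d']) (use h in \<open>simp_all add: xd[symmetric] R\<close>)
    then show ?thesis by blast
  next
    assume h: "x2 \<noteq> 0 \<and> x3 \<noteq> 0 \<and> x4 \<noteq> 0 \<and> x5 \<noteq> 0 \<and> x6 \<noteq> 0 \<and> x1 = 0 \<and> x2*(-x4)*x5*(-x3) = 1"
    have u': "UNIV = {c,d,a,b}" using U by (simp add: insert_commute)
    have d': "distinct [c,d,a,b]" using dist by auto
    have "iso_to (underlying A) 4 K112 \<and> evenly_oriented A"
      by (rule k112_shape[OF og u' d']) (use h in \<open>simp_all add: xd[symmetric] R\<close>)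
    then show ?thesis by blast
  next
    assume h: "x1 \<noteq> 0 \<and> x3 \<noteq> 0 \<and> x4 \<noteq> 0 \<and> x6 \<noteq> 0 \<and> x2 = 0 \<and> x5 = 0 \<and> x1*x4*x6*(-x3) = 1"
    have u': "UNIV = {a,b,c,d}" using U by (simp add: insert_commute)
    have d': "distinct [a,b,c,d]" using dist by auto
    have "iso_to (underlying A) 4 (cycle_graph 4) \<and> evenly_oriented A"
      by (rule c4_shape[OF og u' d']) (use h in \<open>simp_all add: xd[symmetric] R\<close>)
    then show ?thesis by blast
  next
    assume h: "x1 \<noteq> 0 \<and> x3 \<noteq> 0 \<and> x4 \<noteq> 0 \<and> x6 \<noteq> 0 \<and> x2 \<noteq> 0 \<and> x5 = 0 \<and> (-x1)*x3*(-x6)*(-x4) = 1"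
    have u': "UNIV = {a,c,b,d}" using U by (simp add: insert_commute)
    have d': "distinct [a,c,b,d]" using dist by auto
    have "iso_to (underlying A) 4 K112 \<and> evenly_oriented A"
      by (rule k112_shape[OF og u' d']) (use h in \<open>simp_all add: xd[symmetric] R\<close>)
    then show ?thesis by blast
  next
    assume h: "x1 \<noteq> 0 \<and> x3 \<noteq> 0 \<and> x4 \<noteq> 0 \<and> x6 \<noteq> 0 \<and> x5 \<noteq> 0 \<and> x2 = 0 \<and> x1*x4*x6*(-x3) = 1"
    have u': "UNIV = {b,d,a,c}" using U by (simp add: insert_commute)
    have d': "distinct [b,d,a,c]" using dist by auto
    have "iso_to (underlying A) 4 K112 \<and> evenly_oriented A"
      by (rule k112_shape[OF og u' d']) (use h in \<open>simp_all add: xd[symmetric] R\<close>)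
    then show ?thesis by blast
  next
    assume h: "x1 \<noteq> 0 \<and> x2 \<noteq> 0 \<and> x5 \<noteq> 0 \<and> x6 \<noteq> 0 \<and> x3 = 0 \<and> x4 = 0 \<and> x1*x5*(-x6)*(-x2) = 1"
    have u': "UNIV = {a,b,d,c}" using U by (simp add: insert_commute)
    have d': "distinct [a,b,d,c]" using dist by auto
    have "iso_to (underlying A) 4 (cycle_graph 4) \<and> evenly_oriented A"
      by (rule c4_shape[OF og u' d']) (use h in \<open>simp_all add: xd[symmetric] R\<close>)
    then show ?thesis by blast
  next
    assume h: "x1 \<noteq> 0 \<and> x2 \<noteq> 0 \<and> x5 \<noteq> 0 \<and> x6 \<noteq> 0 \<and> x3 \<noteq> 0 \<and> x4 = 0 \<and> (-x1)*x2*x6*(-x5) = 1"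
    have u': "UNIV = {a,d,b,c}" using U by (simp add: insert_commute)
    have d': "distinct [a,d,b,c]" using dist by auto
    have "iso_to (underlying A) 4 K112 \<and> evenly_oriented A"
      by (rule k112_shape[OF og u' d']) (use h in \<open>simp_all add: xd[symmetric] R\<close>)
    then show ?thesis by blast
  next
    assume h: "x1 \<noteq> 0 \<and> x2 \<noteq> 0 \<and> x5 \<noteq> 0 \<and> x6 \<noteq> 0 \<and> x4 \<noteq> 0 \<and> x3 = 0 \<and> x1*x5*(-x6)*(-x2) = 1"
    have u': "UNIV = {b,c,a,d}" using U by (simp add: insert_commute)
    have d': "distinct [b,c,a,d]" using dist by auto
    have "iso_to (underlying A) 4 K112 \<and> evenly_oriented A"
      by (rule k112_shape[OF og u' d']) (use h in \<open>simp_all add: xd[symmetric] R\<close>)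
    then show ?thesis by blast
  qed
qed



lemma all2: "(\<forall>i<2::nat. P i) \<longleftrightarrow> P 0 \<and> P 1"
  by (auto simp: less_Suc_eq numeral_eq_Suc)
lemma all3: "(\<forall>i<3::nat. P i) \<longleftrightarrow> P 0 \<and> P 1 \<and> P 2"
  by (auto simp: less_Suc_eq numeral_eq_Suc)

theorem theorem3p1:
  fixes A :: "'n::finite \<Rightarrow> 'n \<Rightarrow> bool"
  assumes "oriented_graph A"
    and "connected_graph (underlying A)"
    and "CARD('n) \<in> {2, 3, 4}"
    and "skew_rank A = 2"
  shows "(CARD('n) = 2 \<longrightarrow> iso_to (underlying A) 2 (path_graph 2))
       \<and> (CARD('n) = 3 \<longrightarrow> iso_to (underlying A) 3 (complete_graph 3)
                          \<or> iso_to (underlying A) 3 (path_graph 3))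
       \<and> (CARD('n) = 4 \<longrightarrow>
            (iso_to (underlying A) 4 (cycle_graph 4) \<and> evenly_oriented A)
          \<or> iso_to (underlying A) 4 star_K13
          \<or> (iso_to (underlying A) 4 K112 \<and> evenly_oriented A))"
proof (intro conjI impI)
  note og = assms(1) and cn = assms(2)
  let ?U = "underlying A"
  have sym: "?U x y = ?U y x" for x y by (rule und_sym)
  have irr: "\<not> ?U x x" for x using und_irr[OF og] .
  show "iso_to ?U 2 (path_graph 2)" if "CARD('n) = 2"
  proof -
    obtain a b :: 'n where U: "UNIV = {a,b}" and ab: "a \<noteq> b" using \<open>CARD('n) = 2\<close> card_2_iff by metis
    obtain v where "v \<noteq> a" "?U a v" using conn_single[OF cn ab[symmetric]] by auto
    moreover have "v = b" using U \<open>v \<noteq> a\<close> by blast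
    ultimately have e: "?U a b" by simp
    show ?thesis
      by (rule iso_by_list[of "[a,b]"]) (use U ab e irr sym[of a b] in \<open>auto simp: all2 path_graph_def\<close>)
  qed
  show "iso_to ?U 3 (complete_graph 3) \<or> iso_to ?U 3 (path_graph 3)" if "CARD('n) = 3"
  proof -
    obtain a b c :: 'n where U: "UNIV = {a,b,c}" and d: "a \<noteq> b" "b \<noteq> c" "a \<noteq> c"
      using \<open>CARD('n) = 3\<close> card_3_iff by metis
    have all: "v = a \<or> v = b \<or> v = c" for v using U by blast
    have ca: "?U a b \<or> ?U a c"
    proof -
      obtain v where "v \<noteq> a \<and> ?U a v" using conn_single[OF cn d(1)[symmetric]] by auto
      then show ?thesis using all[of v] by auto
    qed
    have cb: "?U b a \<or> ?U b c"
    proof -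
      obtain v where "v \<noteq> b \<and> ?U b v" using conn_single[OF cn d(1)] by auto
      then show ?thesis using all[of v] by auto
    qed
    have cc: "?U c a \<or> ?U c b"
    proof -
      obtain v where "v \<noteq> c \<and> ?U c v" using conn_single[OF cn d(3)] by auto
      then show ?thesis using all[of v] by auto
    qed
    have s: "?U b a = ?U a b" "?U c a = ?U a c" "?U c b = ?U b c" using sym by blast+
    consider "?U a b" "?U a c" "?U b c" | "\<not> ?U a b" "?U a c" "?U b c" | "?U a b" "\<not> ?U a c" "?U b c"
      | "?U a b" "?U a c" "\<not> ?U b c"
      using ca cb cc s by blast
    then show ?thesis
    proof cases
      case 1
      have "iso_to ?U 3 (complete_graph 3)"
        by (rule iso_by_list[of "[a,b,c]"]) (use U d 1 s irr in \<open>auto simp: all3 complete_graph_def\<close>)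
      then show ?thesis ..
    next
      case 2
      have "iso_to ?U 3 (path_graph 3)"
        by (rule iso_by_list[of "[a,c,b]"]) (use U d 2 s irr in \<open>auto simp: all3 path_graph_def\<close>)
      then show ?thesis ..
    next
      case 3
      have "iso_to ?U 3 (path_graph 3)"
        by (rule iso_by_list[of "[a,b,c]"]) (use U d 3 s irr in \<open>auto simp: all3 path_graph_def\<close>)
      then show ?thesis ..
    next
      case 4
      have "iso_to ?U 3 (path_graph 3)"
        by (rule iso_by_list[of "[b,a,c]"]) (use U d 4 s irr in \<open>auto simp: all3 path_graph_def\<close>)
      then show ?thesis ..
    qed
  qed
  show "(iso_to ?U 4 (cycle_graph 4) \<and> evenly_oriented A) \<or> iso_to ?U 4 star_K13
          \<or> (iso_to ?U 4 K112 \<and> evenly_oriented A)" if c4: "CARD('n) = 4"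
  proof -
    obtain a b c d :: 'n where U: "UNIV = {a,b,c,d}" and dist: "distinct [a,b,c,d]"
      using card4_enum[OF c4] by blast
    show ?thesis by (rule main4[OF og cn U dist]) (use assms(4) c4 in simp)
  qed
qed

end
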